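(* Let $\Gamma$ be a connected $k$-regular highly-regular graph with CAM $C=[c_{i,j}]_{1\le i,j\le m}$ and diameter $D=\operatorname{diam}(\Gamma)\ge1$, with chosen partitions $V_1(u)=\{u\},\dots,V_m(u)$ for each vertex $u$. Let $S_0,\dots,S_D$ be nonempty subsets of $\{1,\dots,m\}$ such that $D_i(u)=\bigsqcup_{t\in S_i}V_t(u)$ for every vertex $u$ and every $i$ (such subsets always exist). For $i\in\{1,\dots,D\}$ define $b_{i-1}^{\max}=\max\{\sum_{t\in S_i}c_{t,l}: l\in S_{i-1}\}$ and $c_i^{\min}=\min\{\sum_{t\in S_{i-1}}c_{t,l}: l\in S_i\}$. Then (1) $k=b_0^{\max}\ge b_1^{\max}\ge\cdots\ge b_{D-1}^{\max}\ge1$; (2) $1=c_1^{\min}\le c_2^{\min}\le\cdots\le c_D^{\min}\le k$.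
   Context: All graphs are finite, simple; $d(u,v)$ is graph distance and $D_i(u)=\{v:d(u,v)=i\}$. A graph $\Gamma$ of order $n$ is highly-regular with collapsed adjacency matrix (CAM) $C=[c_{i,j}]_{1\le i,j\le m}$, where $2\le m<n$ (the value $m=n$ is allowed only when $n=2$), if for every vertex $u$ there is a partition of $V(\Gamma)$ into nonempty sets $V_1(u)=\{u\},V_2(u),\dots,V_m(u)$ such that for all $i,j$, every vertex $y\in V_j(u)$ is adjacent to exactly $c_{i,j}$ vertices of $V_i(u)$. *)

theory Defs
  imports Main
begin

definition simple_graph :: "'a set \<Rightarrow> ('a \<Rightarrow> 'a \<Rightarrow> bool) \<Rightarrow> bool" where
  "simple_graph V E \<longleftrightarrow> finite V \<and> (\<forall>x y. E x y \<longrightarrow> x \<in> V \<and> y \<in> V)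
     \<and> (\<forall>x y. E x y \<longrightarrow> E y x) \<and> (\<forall>x. \<not> E x x)"

definition edge_rel :: "('a \<Rightarrow> 'a \<Rightarrow> bool) \<Rightarrow> ('a \<times> 'a) set" where
  "edge_rel E = {(x, y). E x y}"

definition gdist :: "('a \<Rightarrow> 'a \<Rightarrow> bool) \<Rightarrow> 'a \<Rightarrow> 'a \<Rightarrow> nat" where
  "gdist E u v = (LEAST n. (u, v) \<in> edge_rel E ^^ n)"

definition connected_graph :: "'a set \<Rightarrow> ('a \<Rightarrow> 'a \<Rightarrow> bool) \<Rightarrow> bool" where
  "connected_graph V E \<longleftrightarrow> (\<forall>u\<in>V. \<forall>v\<in>V. \<exists>n. (u, v) \<in> edge_rel E ^^ n)"

definition diameter :: "'a set \<Rightarrow> ('a \<Rightarrow> 'a \<Rightarrow> bool) \<Rightarrow> nat" where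
  "diameter V E = Max {gdist E u v | u v. u \<in> V \<and> v \<in> V}"

definition dist_layer :: "'a set \<Rightarrow> ('a \<Rightarrow> 'a \<Rightarrow> bool) \<Rightarrow> nat \<Rightarrow> 'a \<Rightarrow> 'a set" where
  "dist_layer V E i u = {v \<in> V. gdist E u v = i}"

definition k_regular :: "'a set \<Rightarrow> ('a \<Rightarrow> 'a \<Rightarrow> bool) \<Rightarrow> nat \<Rightarrow> bool" where
  "k_regular V E k \<longleftrightarrow> (\<forall>v\<in>V. card {w \<in> V. E v w} = k)"

text \<open>P u i is V_i(u), i = 1..m, C i j is c_{i,j}.  P witnesses that the graph is
  highly-regular with CAM C (of size m).\<close>
definition highly_regular_partition ::
  "'a set \<Rightarrow> ('a \<Rightarrow> 'a \<Rightarrow> bool) \<Rightarrow> nat \<Rightarrow> (nat \<Rightarrow> nat \<Rightarrow> nat) \<Rightarrow> ('a \<Rightarrow> nat \<Rightarrow> 'a set) \<Rightarrow> bool" where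
  "highly_regular_partition V E m C P \<longleftrightarrow>
     (2 \<le> m \<and> (m < card V \<or> (m = card V \<and> card V = 2))) \<and>
     (\<forall>u\<in>V.
        P u 1 = {u} \<and>
        (\<forall>i\<in>{1..m}. P u i \<noteq> {} \<and> P u i \<subseteq> V) \<and>
        (\<forall>i\<in>{1..m}. \<forall>j\<in>{1..m}. i \<noteq> j \<longrightarrow> P u i \<inter> P u j = {}) \<and>
        (\<Union>i\<in>{1..m}. P u i) = V \<and>
        (\<forall>i\<in>{1..m}. \<forall>j\<in>{1..m}. \<forall>y\<in>P u j. card {x \<in> P u i. E x y} = C i j))"

definition highly_regular ::
  "'a set \<Rightarrow> ('a \<Rightarrow> 'a \<Rightarrow> bool) \<Rightarrow> nat \<Rightarrow> (nat \<Rightarrow> nat \<Rightarrow> nat) \<Rightarrow> bool" where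
  "highly_regular V E m C \<longleftrightarrow> (\<exists>P. highly_regular_partition V E m C P)"

end

theory Submission
  imports Defs
begin

context
  fixes V :: "'a set" and E :: "'a \<Rightarrow> 'a \<Rightarrow> bool"
  assumes sg: "simple_graph V E" and cg: "connected_graph V E"
begin

lemma gd_path: "u \<in> V \<Longrightarrow> v \<in> V \<Longrightarrow> (u, v) \<in> edge_rel E ^^ gdist E u v"
  using cg unfolding connected_graph_def gdist_def by (meson LeastI)

lemma gd_le: "(u, v) \<in> edge_rel E ^^ n \<Longrightarrow> gdist E u v \<le> n"
  unfolding gdist_def by (rule Least_le)

lemma gd_tri_r: "u \<in> V \<Longrightarrow> x \<in> V \<Longrightarrow> E x y \<Longrightarrow> gdist E u y \<le> gdist E u x + 1"
proof -
  assume a: "u \<in> V" "x \<in> V" "E x y"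
  have "(u, y) \<in> edge_rel E ^^ Suc (gdist E u x)"
    by (rule relpow_Suc_I[OF gd_path[OF a(1,2)]]) (simp add: edge_rel_def a(3))
  then show ?thesis using gd_le by simp
qed

lemma gd_tri_l: "x \<in> V \<Longrightarrow> y \<in> V \<Longrightarrow> E u x \<Longrightarrow> gdist E u y \<le> gdist E x y + 1"
proof -
  assume a: "x \<in> V" "y \<in> V" "E u x"
  have "(u, y) \<in> edge_rel E ^^ Suc (gdist E x y)"
    by (rule relpow_Suc_I2[OF _ gd_path[OF a(1,2)]]) (simp add: edge_rel_def a(3))
  then show ?thesis using gd_le by simp
qed

lemma E_V: "E x y \<Longrightarrow> x \<in> V \<and> y \<in> V"
  using sg unfolding simple_graph_def by blast

lemma E_sym: "E x y \<Longrightarrow> E y x"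
  using sg unfolding simple_graph_def by blast

lemma E_irr: "\<not> E x x"
  using sg unfolding simple_graph_def by blast

lemma finV: "finite V"
  using sg unfolding simple_graph_def by blast

lemma gd_step_l: "u \<in> V \<Longrightarrow> y \<in> V \<Longrightarrow> gdist E u y = Suc n \<Longrightarrow> \<exists>u'. E u u' \<and> gdist E u' y = n"
proof -
  assume a: "u \<in> V" "y \<in> V" "gdist E u y = Suc n"
  from gd_path[OF a(1,2)] a(3) obtain u' where u': "(u, u') \<in> edge_rel E" "(u', y) \<in> edge_rel E ^^ n"
    by (metis relpow_Suc_D2)
  have e: "E u u'" using u'(1) by (simp add: edge_rel_def)
  have "gdist E u' y \<le> n" using gd_le u'(2) .
  moreover have "gdist E u y \<le> gdist E u' y + 1" using gd_tri_l E_V[OF e] a(2) e by blast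
  ultimately show ?thesis using e a(3) by auto
qed

lemma gd_step_r: "u \<in> V \<Longrightarrow> y \<in> V \<Longrightarrow> gdist E u y = Suc n \<Longrightarrow> \<exists>w. E w y \<and> gdist E u w = n"
proof -
  assume a: "u \<in> V" "y \<in> V" "gdist E u y = Suc n"
  from gd_path[OF a(1,2)] a(3) obtain w where w: "(u, w) \<in> edge_rel E ^^ n" "(w, y) \<in> edge_rel E"
    by (metis relpow_Suc_E)
  have e: "E w y" using w(2) by (simp add: edge_rel_def)
  have "gdist E u w \<le> n" using gd_le w(1) .
  moreover have "gdist E u y \<le> gdist E u w + 1" using gd_tri_r E_V[OF e] a(1) e by blast
  ultimately show ?thesis using e a(3) by auto
qed

lemma gd0: "u \<in> V \<Longrightarrow> v \<in> V \<Longrightarrow> gdist E u v = 0 \<longleftrightarrow> u = v"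
proof
  assume "u \<in> V" "v \<in> V" "gdist E u v = 0"
  then show "u = v" using gd_path by fastforce
next
  assume "u = v"
  then show "gdist E u v = 0" using gd_le[of u v 0] by simp
qed

lemma gd1: "u \<in> V \<Longrightarrow> v \<in> V \<Longrightarrow> gdist E u v = 1 \<longleftrightarrow> E u v"
proof
  assume a: "u \<in> V" "v \<in> V" "gdist E u v = 1"
  then have "(u, v) \<in> edge_rel E ^^ 1" using gd_path by fastforce
  then show "E u v" by (simp add: edge_rel_def)
next
  assume a: "u \<in> V" "v \<in> V" "E u v"
  then have "gdist E u v \<le> 1" using gd_le[of u v 1] by (simp add: edge_rel_def)
  moreover have "u \<noteq> v" using a E_irr by auto
  ultimately show "gdist E u v = 1" using gd0 a by fastforce
qed

end


theorem proposition6p1: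
  fixes V :: "'a set" and E :: "'a \<Rightarrow> 'a \<Rightarrow> bool" and k m :: nat
    and C :: "nat \<Rightarrow> nat \<Rightarrow> nat" and P :: "'a \<Rightarrow> nat \<Rightarrow> 'a set"
    and S :: "nat \<Rightarrow> nat set" and D :: nat
  assumes "simple_graph V E"
    and "connected_graph V E"
    and "k_regular V E k"
    and "highly_regular_partition V E m C P"
    and D_def: "D = diameter V E"
    and "D \<ge> 1"
    and "\<forall>i\<le>D. S i \<noteq> {} \<and> S i \<subseteq> {1..m}"
    and "\<forall>u\<in>V. \<forall>i\<le>D. dist_layer V E i u = (\<Union>t\<in>S i. P u t)"
  shows "let bmax = (\<lambda>i. Max {\<Sum>t\<in>S (i+1). C t l | l. l \<in> S i});
             cmin = (\<lambda>i. Min {\<Sum>t\<in>S (i-1). C t l | l. l \<in> S i})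
         in (k = bmax 0 \<and> (\<forall>i. i + 1 < D \<longrightarrow> bmax (i+1) \<le> bmax i) \<and> bmax (D-1) \<ge> 1)
          \<and> (cmin 1 = 1 \<and> (\<forall>i. 1 \<le> i \<and> i < D \<longrightarrow> cmin i \<le> cmin (i+1)) \<and> cmin D \<le> k)"
proof -
  note sg = assms(1) and cg = assms(2)
  note hr = assms(4)[unfolded highly_regular_partition_def]
  note SS = assms(7) and lay = assms(8)
  have m2: "2 \<le> m" "m \<le> card V" using hr by auto
  have Pne: "P u i \<noteq> {}" "P u i \<subseteq> V" if h: "u \<in> V" "i \<in> {1..m}" for u i
    using hr h by blast+
  have Pdisj: "P u i \<inter> P u j = {}" if h: "u \<in> V" "i \<in> {1..m}" "j \<in> {1..m}" "i \<noteq> j" for u i j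
    using hr h by blast
  have PC: "card {x \<in> P u i. E x y} = C i j" if h: "u \<in> V" "i \<in> {1..m}" "j \<in> {1..m}" "y \<in> P u j" for u i j y
    using hr h by blast
  have finV: "finite V" using finV[OF sg cg] .
  define A where "A i j = {\<Sum>t\<in>S i. C t l | l. l \<in> S j}" for i j
  define f where "f i u y = card {x \<in> dist_layer V E i u. E x y}" for i u y
  have finA: "finite (A i j)" if h: "j \<le> D" for i j
  proof -
    have "finite (S j)" using SS h by (meson finite_atLeastAtMost finite_subset)
    then show ?thesis unfolding A_def by (simp add: Setcompr_eq_image)
  qed
  have neA: "A i j \<noteq> {}" if h: "j \<le> D" for i j
    using SS h unfolding A_def by blast
  have key: "(\<Sum>t\<in>S i. C t l) = f i u y"
    if u: "u \<in> V" and i: "i \<le> D" and l: "l \<in> {1..m}" and y: "y \<in> P u l" for i u l y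
  proof -
    have Si: "S i \<subseteq> {1..m}" using SS i by simp
    have fS: "finite (S i)" using Si by (meson finite_atLeastAtMost finite_subset)
    have L: "dist_layer V E i u = (\<Union>t\<in>S i. P u t)" using lay u i by simp
    have "{x \<in> dist_layer V E i u. E x y} = (\<Union>t\<in>S i. {x \<in> P u t. E x y})"
      unfolding L by blast
    then have "f i u y = card (\<Union>t\<in>S i. {x \<in> P u t. E x y})" unfolding f_def by simp
    also have "\<dots> = (\<Sum>t\<in>S i. card {x \<in> P u t. E x y})"
    proof (rule card_UN_disjoint[OF fS])
      show "\<forall>t\<in>S i. finite {x \<in> P u t. E x y}"
      proof
        fix t assume "t \<in> S i"
        then have "P u t \<subseteq> V" using Pne(2)[OF u] Si by blast
        then have "finite (P u t)" using finV by (rule finite_subset)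
        then show "finite {x \<in> P u t. E x y}" by simp
      qed
      show "\<forall>t\<in>S i. \<forall>t'\<in>S i. t \<noteq> t' \<longrightarrow> {x \<in> P u t. E x y} \<inter> {x \<in> P u t'. E x y} = {}"
        using Pdisj[OF u] Si by blast
    qed
    also have "\<dots> = (\<Sum>t\<in>S i. C t l)"
      by (rule sum.cong) (use PC u Si l y in auto)
    finally show ?thesis by simp
  qed
  have memA: "f i u y \<in> A i j" if h: "u \<in> V" "i \<le> D" "j \<le> D" "y \<in> dist_layer V E j u" for i j u y
  proof -
    have "y \<in> (\<Union>t\<in>S j. P u t)" using lay h by simp
    then obtain l where l: "l \<in> S j" "y \<in> P u l" by blast
    have "S j \<subseteq> {1..m}" using SS h by simp
    then have "l \<in> {1..m}" using l by blast
    then show ?thesis unfolding A_def using key[OF h(1,2) _ l(2)] l by (metis (mono_tags, lifting) mem_Collect_eq)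
  qed
  have exA: "\<exists>y\<in>dist_layer V E j u. a = f i u y"
    if h: "u \<in> V" "i \<le> D" "j \<le> D" "a \<in> A i j" for i j u a
  proof -
    obtain l where l: "l \<in> S j" "a = (\<Sum>t\<in>S i. C t l)" using h unfolding A_def by blast
    have "S j \<subseteq> {1..m}" using SS h by simp
    then have lm: "l \<in> {1..m}" using l by blast
    then obtain y where y: "y \<in> P u l" using Pne(1)[OF h(1) lm] by blast
    have "y \<in> (\<Union>t\<in>S j. P u t)" using l y by blast
    then have "y \<in> dist_layer V E j u" using lay h by simp
    then show ?thesis using key[OF h(1,2) lm y] l by auto
  qed
  have Vne: "V \<noteq> {}" using m2 by auto
  then obtain u0 where u0: "u0 \<in> V" by blast
  have layV: "y \<in> V" "gdist E u y = j" if h: "y \<in> dist_layer V E j u" for y j u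
    using h unfolding dist_layer_def by auto
  have inlay: "y \<in> dist_layer V E j u" if h: "y \<in> V" "gdist E u y = j" for y j u
    using h unfolding dist_layer_def by auto
  have fle: "f i u y \<le> k" if h: "y \<in> V" for i u y
  proof -
    have "f i u y \<le> card {w \<in> V. E y w}"
      unfolding f_def by (rule card_mono) (use finV E_sym[OF sg cg] in \<open>auto simp: dist_layer_def\<close>)
    then show ?thesis using assms(3) h unfolding k_regular_def by auto
  qed
  have b0: "Max (A 1 0) = k"
  proof -
    have "A 1 0 = {k}"
    proof
      show "A 1 0 \<subseteq> {k}"
      proof
        fix a assume "a \<in> A 1 0"
        then obtain y where y: "y \<in> dist_layer V E 0 u0" "a = f 1 u0 y" using exA u0 assms(6) by blast
        have "y = u0" using layV[OF y(1)] gd0[OF sg cg u0] by auto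
        have "{x \<in> dist_layer V E 1 u0. E x u0} = {w \<in> V. E u0 w}"
          using gd1[OF sg cg u0] E_sym[OF sg cg] unfolding dist_layer_def by blast
        then have "a = k" using y(2) \<open>y = u0\<close> assms(3) u0 unfolding f_def k_regular_def by auto
        then show "a \<in> {k}" by simp
      qed
      show "{k} \<subseteq> A 1 0" using \<open>A 1 0 \<subseteq> {k}\<close> neA[of 0 1] by auto
    qed
    then show ?thesis by simp
  qed
  have bmono: "Max (A (i+2) (i+1)) \<le> Max (A (i+1) i)" if h: "i + 1 < D" for i
  proof -
    have h1: "i + 1 \<le> D" "i + 2 \<le> D" "i \<le> D" using h by auto
    have "Max (A (i+2) (i+1)) \<in> A (i+2) (i+1)" by (rule Max_in[OF finA[OF h1(1)] neA[OF h1(1)]])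
    then obtain y where y: "y \<in> dist_layer V E (i+1) u0" "Max (A (i+2) (i+1)) = f (i+2) u0 y"
      using exA[OF u0 h1(2) h1(1)] by blast
    note yV = layV[OF y(1)]
    have "gdist E u0 y = Suc i" using yV(2) by simp
    then obtain u' where u': "E u0 u'" "gdist E u' y = i" using gd_step_l[OF sg cg u0 yV(1)] by blast
    have u'V: "u' \<in> V" using E_V[OF sg cg u'(1)] by blast
    have "f (i+2) u0 y \<le> f (i+1) u' y"
      unfolding f_def
    proof (rule card_mono)
      show "finite {x \<in> dist_layer V E (i + 1) u'. E x y}" using finV unfolding dist_layer_def by simp
      show "{x \<in> dist_layer V E (i + 2) u0. E x y} \<subseteq> {x \<in> dist_layer V E (i + 1) u'. E x y}"
      proof
        fix x assume x0: "x \<in> {x \<in> dist_layer V E (i + 2) u0. E x y}"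
        then have x: "x \<in> dist_layer V E (i + 2) u0" "E x y" by simp_all
        note xV = layV[OF x(1)]
        have "gdist E u' x \<le> gdist E u' y + 1" using gd_tri_r[OF sg cg u'V yV(1) E_sym[OF sg cg x(2)]] .
        moreover have "gdist E u0 x \<le> gdist E u' x + 1" using gd_tri_l[OF sg cg u'V xV(1) u'(1)] .
        ultimately have "gdist E u' x = i + 1" using xV(2) u'(2) by linarith
        then have "x \<in> dist_layer V E (i + 1) u'" by (rule inlay[OF xV(1)])
        then show "x \<in> {x \<in> dist_layer V E (i + 1) u'. E x y}" using x(2) by simp
      qed
    qed
    also have "\<dots> \<le> Max (A (i+1) i)"
    proof (rule Max_ge[OF finA[OF h1(3)]])
      show "f (i+1) u' y \<in> A (i+1) i" using memA[OF u'V h1(1) h1(3) inlay[OF yV(1) u'(2)]] .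
    qed
    finally show ?thesis using y by simp
  qed
  obtain ud vd where d: "ud \<in> V" "vd \<in> V" "gdist E ud vd = D"
  proof -
    let ?X = "{gdist E u v | u v. u \<in> V \<and> v \<in> V}"
    have "?X \<subseteq> (\<lambda>(u,v). gdist E u v) ` (V \<times> V)" by auto
    then have "finite ?X" using finV by (meson finite_SigmaI finite_imageI finite_subset)
    moreover have "?X \<noteq> {}" using u0 by auto
    ultimately have "Max ?X \<in> ?X" by (rule Max_in)
    then show ?thesis using that D_def unfolding diameter_def by auto
  qed
  have bD: "1 \<le> Max (A D (D-1))"
  proof -
    have hD: "D - 1 \<le> D" "D \<le> D" by simp_all
    have "gdist E ud vd = Suc (D - 1)" using d(3) assms(6) by simp
    then obtain w where w: "E w vd" "gdist E ud w = D - 1"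
      using gd_step_r[OF sg cg d(1,2)] by blast
    have wV: "w \<in> V" using E_V[OF sg cg w(1)] by blast
    have "vd \<in> {x \<in> dist_layer V E D ud. E x w}"
      using inlay[OF d(2) d(3)] E_sym[OF sg cg w(1)] by simp
    moreover have "finite {x \<in> dist_layer V E D ud. E x w}" using finV unfolding dist_layer_def by simp
    ultimately have "0 < f D ud w" unfolding f_def using card_gt_0_iff by blast
    also have "f D ud w \<le> Max (A D (D-1))"
    proof (rule Max_ge[OF finA[OF hD(1)]])
      show "f D ud w \<in> A D (D-1)" using memA[OF d(1) hD(2) hD(1) inlay[OF wV w(2)]] .
    qed
    finally show ?thesis by simp
  qed
  have c1: "Min (A 0 1) = 1"
  proof -
    have h1: "1 \<le> D" "0 \<le> D" using assms(6) by simp_all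
    have "A 0 1 = {1}"
    proof
      show "A 0 1 \<subseteq> {1}"
      proof
        fix a assume "a \<in> A 0 1"
        then obtain y where y: "y \<in> dist_layer V E 1 u0" "a = f 0 u0 y" using exA[OF u0 h1(2) h1(1)] by blast
        note yV = layV[OF y(1)]
        have "E u0 y" using yV gd1[OF sg cg u0 yV(1)] by simp
        have "{x \<in> dist_layer V E 0 u0. E x y} = {u0}"
        proof safe
          fix x assume "x \<in> dist_layer V E 0 u0"
          then show "x = u0" using layV[of x 0 u0] gd0[OF sg cg u0, of x] by auto
        next
          show "u0 \<in> dist_layer V E 0 u0" using inlay[OF u0, of u0 0] gd0[OF sg cg u0 u0] by simp
          show "E u0 y" by fact
        qed
        then have "a = 1" using y(2) unfolding f_def by simp
        then show "a \<in> {1}" by simp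
      qed
      show "{1} \<subseteq> A 0 1" using \<open>A 0 1 \<subseteq> {1}\<close> neA[OF h1(1), of 0] by blast
    qed
    then show ?thesis by simp
  qed
  have cmono: "Min (A (i-1) i) \<le> Min (A i (i+1))" if h: "1 \<le> i" "i < D" for i
  proof -
    have h1: "i + 1 \<le> D" "i \<le> D" "i - 1 \<le> D" using h by auto
    have "Min (A i (i+1)) \<in> A i (i+1)" by (rule Min_in[OF finA[OF h1(1)] neA[OF h1(1)]])
    then obtain y where y: "y \<in> dist_layer V E (i+1) u0" "Min (A i (i+1)) = f i u0 y"
      using exA[OF u0 h1(2) h1(1)] by blast
    note yV = layV[OF y(1)]
    have "gdist E u0 y = Suc i" using yV(2) by simp
    then obtain u' where u': "E u0 u'" "gdist E u' y = i" using gd_step_l[OF sg cg u0 yV(1)] by blast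
    have u'V: "u' \<in> V" using E_V[OF sg cg u'(1)] by blast
    have "Min (A (i-1) i) \<le> f (i-1) u' y"
    proof (rule Min_le[OF finA[OF h1(2)]])
      show "f (i-1) u' y \<in> A (i-1) i" using memA[OF u'V h1(3) h1(2) inlay[OF yV(1) u'(2)]] .
    qed
    also have "f (i-1) u' y \<le> f i u0 y"
      unfolding f_def
    proof (rule card_mono)
      show "finite {x \<in> dist_layer V E i u0. E x y}" using finV unfolding dist_layer_def by simp
      show "{x \<in> dist_layer V E (i-1) u'. E x y} \<subseteq> {x \<in> dist_layer V E i u0. E x y}"
      proof
        fix x assume x0: "x \<in> {x \<in> dist_layer V E (i-1) u'. E x y}"
        then have x: "x \<in> dist_layer V E (i-1) u'" "E x y" by simp_all
        note xV = layV[OF x(1)]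
        have "gdist E u0 y \<le> gdist E u0 x + 1" using gd_tri_r[OF sg cg u0 xV(1) x(2)] .
        moreover have "gdist E u0 x \<le> gdist E u' x + 1" using gd_tri_l[OF sg cg u'V xV(1) u'(1)] .
        ultimately have "gdist E u0 x = i" using xV(2) yV(2) h(1) by linarith
        then have "x \<in> dist_layer V E i u0" by (rule inlay[OF xV(1)])
        then show "x \<in> {x \<in> dist_layer V E i u0. E x y}" using x(2) by simp
      qed
    qed
    finally show ?thesis using y by simp
  qed
  have cD: "Min (A (D-1) D) \<le> k"
  proof -
    have hD: "D - 1 \<le> D" "D \<le> D" by simp_all
    have "Min (A (D-1) D) \<in> A (D-1) D" by (rule Min_in[OF finA[OF hD(2)] neA[OF hD(2)]])
    then obtain y where y: "y \<in> dist_layer V E D u0" "Min (A (D-1) D) = f (D-1) u0 y"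
      using exA[OF u0 hD(1) hD(2)] by blast
    then show ?thesis using fle[OF layV(1)[OF y(1)]] by simp
  qed
  have bm: "k = Max (A (0+1) 0)" "\<forall>i. i + 1 < D \<longrightarrow> Max (A (i+1+1) (i+1)) \<le> Max (A (i+1) i)"
    "1 \<le> Max (A (D-1+1) (D-1))"
    using b0 bmono bD assms(6) by (simp_all add: numeral_2_eq_2)
  have cm: "Min (A (1-1) 1) = 1" "\<forall>i. 1 \<le> i \<and> i < D \<longrightarrow> Min (A (i-1) i) \<le> Min (A (i+1-1) (i+1))"
    "Min (A (D-1) D) \<le> k"
    using c1 cmono cD by simp_all
  show ?thesis
    unfolding Let_def A_def[symmetric]
    using bm cm by blast
qed

end
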